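(* Each of the following eight functions on $TN$ is a smooth first integral of the geodesic flow of $(N,g)$ and is invariant under the left action of $\Gamma$ on $TN$ (hence descends to a first integral of the geodesic flow on $(\Gamma\backslash N,g)$): for a point $((v,z),V+Z)\in TN\cong N\times\mathfrak n$ with $V\in\mathfrak v$, $Z\in\mathfrak z$, $q^W((v,z),V+Z)=\langle Z,W\rangle$ for $W\in\{Z_i,Z_j,Z_k\}$; $h_1=\langle V,E_1(Z)\rangle^2+\langle V,E_2(Z)\rangle^2$; $h_2=\langle V,E_3(Z)\rangle^2+\langle V,E_4(Z)\rangle^2$; $k=\langle V,Y(Z)\rangle$; and for $X\in\{X_i,X_j\}$, $f^X((v,z),V+Z)=0$ if $Z=Z_c$ with $c_k=0$, and $f^X((v,z),V+Z)=\Phi(Z)\sin\bigl(2\pi\langle X,v_{\mathfrak x}-C(Z)V_{\mathfrak y}\rangle\bigr)$ otherwise.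
   Context: Let $\mathfrak v$ have orthonormal basis $X_i,X_j,Y_i,Y_j,Y_k$, $\mathfrak z$ orthonormal basis $Z_i,Z_j,Z_k$, $\mathfrak n=\mathfrak v\oplus\mathfrak z$ orthogonal, with two-step nilpotent bracket ($\mathfrak z$ central, $[\mathfrak v,\mathfrak v]\subseteq\mathfrak z$) whose only nonzero basis brackets up to antisymmetry are $[X_i,Y_j]=Z_k$, $[X_i,Y_k]=-Z_j$, $[X_j,Y_i]=-Z_k$, $[X_j,Y_k]=Z_i$. Define $j:\mathfrak z\to\mathfrak{so}(\mathfrak v)$ by $\langle j(Z)X,Y\rangle=\langle Z,[X,Y]\rangle$. $N$ is the simply connected Lie group with Lie algebra $\mathfrak n$, $g$ the left invariant metric from the inner product, $\Gamma=\exp(\mathrm{span}_{\mathbb Z}\{X_i,X_j,Y_i,Y_j,Y_k,\tfrac12Z_i,\tfrac12Z_j,\tfrac12Z_k\})$. Elements of $N$ are written $(v,z):=\exp(v+z)$, $v\in\mathfrak v$, $z\in\mathfrak z$, so $(v,z)(\bar v,\bar z)=(v+\bar v,z+\bar z+\tfrac12[v,\bar v])$; $TN$ is identified with $N\times\mathfrak n$ by left translation ($X\in T_pN\mapsto(p,L_{p*}^{-1}X)$). Let $\mathfrak x=\mathrm{span}\{X_i,X_j\}$, $\mathfrak y=\mathrm{span}\{Y_i,Y_j,Y_k\}$, and $V_{\mathfrak x},V_{\mathfrak y}$ the components of $V\in\mathfrak v$. For $Z=Z_c=c_iZ_i+c_jZ_j+c_kZ_k$: $E_1(Z)=c_iX_i+c_jX_j$,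 $E_2(Z)=-c_jY_i+c_iY_j$, $E_3(Z)=|c|(c_jX_i-c_iX_j)$, $E_4(Z)=c_k(c_iY_i+c_jY_j)-(c_i^2+c_j^2)Y_k$, $Y(Z)=c_iY_i+c_jY_j+c_kY_k$. For $c_k\neq0$, $C(Z):\mathfrak y\to\mathfrak x$ is the linear map with matrix (w.r.t. bases $(Y_i,Y_j,Y_k)$ and $(X_i,X_j)$) $(c_k|c|^2)^{-1}\begin{pmatrix}-c_ic_j & c_i^2+c_k^2 & -c_jc_k\\ -c_j^2-c_k^2 & c_ic_j & c_ic_k\end{pmatrix}$. Let $\phi(x)=e^{-1/x^2}$ for $x\neq0$, $\phi(0)=0$, and $\Phi(Z_c)=\phi(c_k|c|^2)$. *)

theory Defs
  imports "HOL-Analysis.Analysis"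
begin

text \<open>The Lie algebra n = v + z is modelled as real^8 with the standard
 (orthonormal) basis, ordered X_i, X_j, Y_i, Y_j, Y_k, Z_i, Z_j, Z_k (indices 0..7).
 Following the paper, N is identified with n via (v,z) = exp(v+z); the group law is
 (v,z)(v',z') = (v+v', z+z'+1/2[v,v']).  TN is identified with N x n by left translation.\<close>

definition Xi :: "real^8" where "Xi = axis 0 1"
definition Xj :: "real^8" where "Xj = axis 1 1"
definition Yi :: "real^8" where "Yi = axis 2 1"
definition Yj :: "real^8" where "Yj = axis 3 1"
definition Yk :: "real^8" where "Yk = axis 4 1"
definition Zi :: "real^8" where "Zi = axis 5 1"
definition Zj :: "real^8" where "Zj = axis 6 1"
definition Zk :: "real^8" where "Zk = axis 7 1"

definition vpart :: "real^8 \<Rightarrow> real^8" where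
  "vpart x = x$0 *\<^sub>R Xi + x$1 *\<^sub>R Xj + x$2 *\<^sub>R Yi + x$3 *\<^sub>R Yj + x$4 *\<^sub>R Yk"
definition zpart :: "real^8 \<Rightarrow> real^8" where
  "zpart x = x$5 *\<^sub>R Zi + x$6 *\<^sub>R Zj + x$7 *\<^sub>R Zk"
definition xpart :: "real^8 \<Rightarrow> real^8" where
  "xpart x = x$0 *\<^sub>R Xi + x$1 *\<^sub>R Xj"
definition ypart :: "real^8 \<Rightarrow> real^8" where
  "ypart x = x$2 *\<^sub>R Yi + x$3 *\<^sub>R Yj + x$4 *\<^sub>R Yk"

definition brk :: "real^8 \<Rightarrow> real^8 \<Rightarrow> real^8" where
  "brk x y = (x$0 * y$3 - x$3 * y$0) *\<^sub>R Zk - (x$0 * y$4 - x$4 * y$0) *\<^sub>R Zj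
           - (x$1 * y$2 - x$2 * y$1) *\<^sub>R Zk + (x$1 * y$4 - x$4 * y$1) *\<^sub>R Zi"

definition nmult :: "real^8 \<Rightarrow> real^8 \<Rightarrow> real^8" where
  "nmult p q = p + q + (1/2) *\<^sub>R brk p q"

definition Lstar :: "real^8 \<Rightarrow> real^8 \<Rightarrow> real^8" where
  "Lstar p X = X + (1/2) *\<^sub>R brk p X"
definition Linv :: "real^8 \<Rightarrow> real^8 \<Rightarrow> real^8" where
  "Linv p Y = Y - (1/2) *\<^sub>R brk p Y"

definition Gamma :: "(real^8) set" where
  "Gamma = {of_int a *\<^sub>R Xi + of_int b *\<^sub>R Xj + of_int c *\<^sub>R Yi + of_int d *\<^sub>R Yj
            + of_int e *\<^sub>R Yk + of_int f *\<^sub>R ((1/2) *\<^sub>R Zi) + of_int g *\<^sub>R ((1/2) *\<^sub>R Zj)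
            + of_int h *\<^sub>R ((1/2) *\<^sub>R Zk) | a b c d e f g h. True}"

text \<open>Left-invariant metric in the global coordinates: g_p(A,B) = <L_p*^{-1}A, L_p*^{-1}B>.\<close>
definition gco :: "real^8 \<Rightarrow> 8 \<Rightarrow> 8 \<Rightarrow> real" where
  "gco p k l = Linv p (axis k 1) \<bullet> Linv p (axis l 1)"

definition pdiff :: "(real^8 \<Rightarrow> real) \<Rightarrow> 8 \<Rightarrow> real^8 \<Rightarrow> real" where
  "pdiff h i p = deriv (\<lambda>s. h (p + s *\<^sub>R axis i 1)) 0"

definition chr1 :: "real^8 \<Rightarrow> 8 \<Rightarrow> 8 \<Rightarrow> 8 \<Rightarrow> real" where
  "chr1 p i j k = (pdiff (\<lambda>q. gco q j k) i p + pdiff (\<lambda>q. gco q i k) j p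
                   - pdiff (\<lambda>q. gco q i j) k p) / 2"

definition geodesic ::
  "(real \<Rightarrow> real^8) \<Rightarrow> (real \<Rightarrow> real^8) \<Rightarrow> real \<Rightarrow> real \<Rightarrow> bool" where
  "geodesic \<gamma> \<gamma>' a b \<longleftrightarrow> (\<exists>\<gamma>''. \<forall>t\<in>{a<..<b}.
      (\<gamma> has_vector_derivative \<gamma>' t) (at t) \<and>
      (\<gamma>' has_vector_derivative \<gamma>'' t) (at t) \<and>
      (\<forall>k. (\<Sum>l\<in>UNIV. gco (\<gamma> t) k l * \<gamma>'' t $ l)
           + (\<Sum>i\<in>UNIV. \<Sum>j\<in>UNIV. chr1 (\<gamma> t) i j k * \<gamma>' t $ i * \<gamma>' t $ j) = 0))"

definition first_integral :: "((real^8) \<times> (real^8) \<Rightarrow> real) \<Rightarrow> bool" where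
  "first_integral F \<longleftrightarrow> (\<forall>\<gamma> \<gamma>' a b. geodesic \<gamma> \<gamma>' a b \<longrightarrow>
     (\<forall>s\<in>{a<..<b}. \<forall>t\<in>{a<..<b}.
        F (\<gamma> s, Linv (\<gamma> s) (\<gamma>' s)) = F (\<gamma> t, Linv (\<gamma> t) (\<gamma>' t))))"

definition Gamma_invariant :: "((real^8) \<times> (real^8) \<Rightarrow> real) \<Rightarrow> bool" where
  "Gamma_invariant F \<longleftrightarrow> (\<forall>\<gamma>\<in>Gamma. \<forall>p X. F (nmult \<gamma> p, X) = F (p, X))"

primrec Ck :: "nat \<Rightarrow> ('a::euclidean_space \<Rightarrow> real) \<Rightarrow> bool" where
  "Ck 0 f = continuous_on UNIV f"
| "Ck (Suc n) f = (f differentiable_on UNIV \<and>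
      (\<forall>b\<in>Basis. Ck n (\<lambda>x. frechet_derivative f (at x) b)))"

definition smooth :: "('a::euclidean_space \<Rightarrow> real) \<Rightarrow> bool" where
  "smooth f \<longleftrightarrow> (\<forall>n. Ck n f)"

definition ci :: "real^8 \<Rightarrow> real" where "ci Z = Z \<bullet> Zi"
definition cj :: "real^8 \<Rightarrow> real" where "cj Z = Z \<bullet> Zj"
definition ck :: "real^8 \<Rightarrow> real" where "ck Z = Z \<bullet> Zk"
definition cabs :: "real^8 \<Rightarrow> real" where
  "cabs Z = sqrt ((ci Z)^2 + (cj Z)^2 + (ck Z)^2)"

definition E1 :: "real^8 \<Rightarrow> real^8" where "E1 Z = ci Z *\<^sub>R Xi + cj Z *\<^sub>R Xj"
definition E2 :: "real^8 \<Rightarrow> real^8" where "E2 Z = (- cj Z) *\<^sub>R Yi + ci Z *\<^sub>R Yj"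
definition E3 :: "real^8 \<Rightarrow> real^8" where
  "E3 Z = cabs Z *\<^sub>R (cj Z *\<^sub>R Xi - ci Z *\<^sub>R Xj)"
definition E4 :: "real^8 \<Rightarrow> real^8" where
  "E4 Z = ck Z *\<^sub>R (ci Z *\<^sub>R Yi + cj Z *\<^sub>R Yj) - ((ci Z)^2 + (cj Z)^2) *\<^sub>R Yk"
definition YZ :: "real^8 \<Rightarrow> real^8" where
  "YZ Z = ci Z *\<^sub>R Yi + cj Z *\<^sub>R Yj + ck Z *\<^sub>R Yk"

text \<open>C(Z) : y -> x (for c_k \<noteq> 0), given by its matrix w.r.t. (Y_i,Y_j,Y_k), (X_i,X_j)\<close>
definition CZ :: "real^8 \<Rightarrow> real^8 \<Rightarrow> real^8" where
  "CZ Z W = (let a = ci Z; b = cj Z; c = ck Z; d = c * (cabs Z)^2;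
                 y1 = W \<bullet> Yi; y2 = W \<bullet> Yj; y3 = W \<bullet> Yk in
     (((- a) * b * y1 + (a^2 + c^2) * y2 - b * c * y3) / d) *\<^sub>R Xi
   + (((- (b^2) - c^2) * y1 + a * b * y2 + a * c * y3) / d) *\<^sub>R Xj)"

definition phi :: "real \<Rightarrow> real" where
  "phi x = (if x = 0 then 0 else exp (- 1 / x^2))"
definition Phi :: "real^8 \<Rightarrow> real" where
  "Phi Z = phi (ck Z * (cabs Z)^2)"

definition qW :: "real^8 \<Rightarrow> (real^8) \<times> (real^8) \<Rightarrow> real" where
  "qW W = (\<lambda>(p, A). zpart A \<bullet> W)"
definition h1 :: "(real^8) \<times> (real^8) \<Rightarrow> real" where
  "h1 = (\<lambda>(p, A). (vpart A \<bullet> E1 (zpart A))^2 + (vpart A \<bullet> E2 (zpart A))^2)"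
definition h2 :: "(real^8) \<times> (real^8) \<Rightarrow> real" where
  "h2 = (\<lambda>(p, A). (vpart A \<bullet> E3 (zpart A))^2 + (vpart A \<bullet> E4 (zpart A))^2)"
definition kfun :: "(real^8) \<times> (real^8) \<Rightarrow> real" where
  "kfun = (\<lambda>(p, A). vpart A \<bullet> YZ (zpart A))"
definition fX :: "real^8 \<Rightarrow> (real^8) \<times> (real^8) \<Rightarrow> real" where
  "fX X = (\<lambda>(p, A). (let Z = zpart A; V = vpart A; v = vpart p in
      if ck Z = 0 then 0
      else Phi Z * sin (2 * pi * (X \<bullet> (xpart v - CZ Z (ypart V))))))"

end

theory Submission
  imports Defs
begin


lemma UNIV8: "(UNIV::8 set) = {0,1,2,3,4,5,6,7}"
  by (rule card_subset_eq[symmetric]) simp_all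
lemma sum8: "(\<Sum>i\<in>UNIV. f i) = f (0::8) + f 1 + f 2 + f 3 + f 4 + f 5 + f 6 + f 7" 
  unfolding UNIV8 apply (subst sum.insert, simp, simp)+ by (simp add: add.assoc)
lemma inner8: "(x::real^8) \<bullet> y = x$0*y$0 + x$1*y$1 + x$2*y$2 + x$3*y$3 + x$4*y$4 + x$5*y$5 + x$6*y$6 + x$7*y$7"
  by (simp only: inner_vec_def sum8 inner_real_def)

lemma brk_nth: "brk x y $ i = (if i = 5 then x$1*y$4 - x$4*y$1 else if i = 6 then -(x$0*y$4 - x$4*y$0)
   else if i = 7 then x$0*y$3 - x$3*y$0 - (x$1*y$2 - x$2*y$1) else 0)"
  by (simp add: brk_def Zi_def Zj_def Zk_def axis_def)

lemma brk_add1: "brk (x + y) z = brk x z + brk y z"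
  by (simp add: vec_eq_iff brk_nth algebra_simps)
lemma brk_add2: "brk x (y + z) = brk x y + brk x z"
  by (simp add: vec_eq_iff brk_nth algebra_simps)
lemma brk_scale1: "brk (c *\<^sub>R x) z = c *\<^sub>R brk x z"
  by (simp add: vec_eq_iff brk_nth algebra_simps)
lemma brk_scale2: "brk x (c *\<^sub>R z) = c *\<^sub>R brk x z"
  by (simp add: vec_eq_iff brk_nth algebra_simps)
lemma brk_anti: "brk x y = - brk y x"
  by (simp add: vec_eq_iff brk_nth algebra_simps)
lemma brk_self: "brk x x = 0"
  by (simp add: vec_eq_iff brk_nth algebra_simps)
lemma brk_diff1: "brk (x - y) z = brk x z - brk y z"
  by (simp add: vec_eq_iff brk_nth algebra_simps)
lemma brk_diff2: "brk x (y - z) = brk x y - brk x z"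
  by (simp add: vec_eq_iff brk_nth algebra_simps)

lemma bilinear_brk: "bilinear brk"
  unfolding bilinear_def by (auto intro!: linearI simp: brk_add1 brk_add2 brk_scale1 brk_scale2)

lemma Linv_add: "Linv p (x + y) = Linv p x + Linv p y"
  by (simp add: Linv_def brk_add2 algebra_simps)
lemma Linv_scale: "Linv p (c *\<^sub>R x) = c *\<^sub>R Linv p x"
  by (simp add: Linv_def brk_scale2 algebra_simps)
lemma Linv_shift: "Linv (p + s *\<^sub>R q) y = Linv p y - (s/2) *\<^sub>R brk q y"
  by (simp add: Linv_def brk_add1 brk_scale1 algebra_simps)

lemma linear_sum_basis:
  fixes f :: "real^'n \<Rightarrow> real"
  assumes "linear f"
  shows "(\<Sum>i\<in>UNIV. x$i * f (axis i 1)) = f x"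
proof -
  have "f x = f (\<Sum>i\<in>UNIV. x $ i *\<^sub>R axis i 1)"
    by (metis basis_expansion scalar_mult_eq_scaleR)
  also have "\<dots> = (\<Sum>i\<in>UNIV. x$i * f (axis i 1))"
    using assms by (simp add: linear_sum linear_scale)
  finally show ?thesis by simp
qed

lemma bilinear_sum_basis:
  fixes B :: "real^'n \<Rightarrow> real^'n \<Rightarrow> real"
  assumes "\<And>v. linear (\<lambda>u. B u v)" "\<And>u. linear (\<lambda>v. B u v)"
  shows "(\<Sum>i\<in>UNIV. \<Sum>j\<in>UNIV. B (axis i 1) (axis j 1) * x$i * x$j) = B x x"
proof -
  have "(\<Sum>i\<in>UNIV. \<Sum>j\<in>UNIV. B (axis i 1) (axis j 1) * x$i * x$j)
      = (\<Sum>i\<in>UNIV. x$i * (\<Sum>j\<in>UNIV. x$j * B (axis i 1) (axis j 1)))"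
    by (simp add: sum_distrib_left algebra_simps)
  also have "\<dots> = (\<Sum>i\<in>UNIV. x$i * B (axis i 1) x)"
    using linear_sum_basis[OF assms(2)] by simp
  also have "\<dots> = B x x"
    using linear_sum_basis[OF assms(1)] by simp
  finally show ?thesis .
qed


lemma pdiff_gco: "pdiff (\<lambda>q. gco q j k) i p =
   -(1/2) * (brk (axis i 1) (axis j 1) \<bullet> Linv p (axis k 1) + Linv p (axis j 1) \<bullet> brk (axis i 1) (axis k 1))"
proof -
  define A where "A = Linv p (axis j 1)"
  define B where "B = Linv p (axis k 1)"
  define P where "P = brk (axis i 1) (axis j 1)"
  define Q where "Q = brk (axis i 1) (axis k 1)"
  have eq: "(\<lambda>s. gco (p + s *\<^sub>R axis i 1) j k) = (\<lambda>s. A \<bullet> B - s * ((P \<bullet> B + A \<bullet> Q)/2) + s^2 * (P \<bullet> Q / 4))"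
  proof
    fix s
    have "gco (p + s *\<^sub>R axis i 1) j k = (A - (s/2) *\<^sub>R P) \<bullet> (B - (s/2) *\<^sub>R Q)"
      by (simp only: gco_def Linv_shift A_def B_def P_def Q_def)
    also have "\<dots> = A \<bullet> B - s * ((P \<bullet> B + A \<bullet> Q)/2) + s^2 * (P \<bullet> Q / 4)"
      by (simp add: inner_diff_left inner_diff_right power2_eq_square inner_commute[of P B] field_simps)
    finally show "gco (p + s *\<^sub>R axis i 1) j k = A \<bullet> B - s * ((P \<bullet> B + A \<bullet> Q)/2) + s^2 * (P \<bullet> Q / 4)" .
  qed
  have "((\<lambda>s. A \<bullet> B - s * ((P \<bullet> B + A \<bullet> Q)/2) + s^2 * (P \<bullet> Q / 4)) has_real_derivative
     -((P \<bullet> B + A \<bullet> Q)/2)) (at 0)"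
    by (auto intro!: derivative_eq_intros)
  then have "deriv (\<lambda>s. gco (p + s *\<^sub>R axis i 1) j k) 0 = -((P \<bullet> B + A \<bullet> Q)/2)"
    unfolding eq by (rule DERIV_imp_deriv)
  then show ?thesis unfolding pdiff_def by (simp add: A_def B_def P_def Q_def)
qed


definition BB :: "real^8 \<Rightarrow> 8 \<Rightarrow> real^8 \<Rightarrow> real^8 \<Rightarrow> real" where
  "BB p k u v = (-(1/2)*(brk u v \<bullet> Linv p (axis k 1) + Linv p v \<bullet> brk u (axis k 1))
     - (1/2)*(brk v u \<bullet> Linv p (axis k 1) + Linv p u \<bullet> brk v (axis k 1))
     + (1/2)*(brk (axis k 1) u \<bullet> Linv p v + Linv p u \<bullet> brk (axis k 1) v))/2"

lemma chr1_BB: "chr1 p i j k = BB p k (axis i 1) (axis j 1)"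
  by (simp add: chr1_def pdiff_gco BB_def)

lemma BB_lin1: "linear (\<lambda>u. BB p k u v)"
  apply (rule linearI)
   apply (simp add: BB_def brk_add1 brk_add2 Linv_add inner_add_left inner_add_right)
   apply (simp add: field_simps)
  apply (simp add: BB_def brk_scale1 brk_scale2 Linv_scale algebra_simps)
  done
lemma BB_lin2: "linear (\<lambda>v. BB p k u v)"
  apply (rule linearI)
   apply (simp add: BB_def brk_add1 brk_add2 Linv_add inner_add_left inner_add_right)
   apply (simp add: field_simps)
  apply (simp add: BB_def brk_scale1 brk_scale2 Linv_scale algebra_simps)
  done

lemma BB_diag: "BB p k x x = - (Linv p x \<bullet> brk x (axis k 1))"
proof -
  have "brk (axis k 1) x = - brk x (axis k 1)" by (rule brk_anti)
  then show ?thesis by (simp add: BB_def brk_self inner_commute[of "brk x (axis k 1)"])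
qed

lemma Linv_lin: "linear (Linv p)"
  by (rule linearI) (simp_all add: Linv_add Linv_scale)

lemma geo_sum: "(\<Sum>l\<in>UNIV. gco p k l * y $ l) + (\<Sum>i\<in>UNIV. \<Sum>j\<in>UNIV. chr1 p i j k * x $ i * x $ j)
   = Linv p (axis k 1) \<bullet> Linv p y - Linv p x \<bullet> brk x (axis k 1)"
proof -
  have l: "linear (\<lambda>v. Linv p (axis k 1) \<bullet> Linv p v)"
    by (rule linearI) (simp_all add: Linv_add Linv_scale inner_add_right)
  have "(\<Sum>l\<in>UNIV. gco p k l * y $ l) = (\<Sum>l\<in>UNIV. y $ l * (Linv p (axis k 1) \<bullet> Linv p (axis l 1)))"
    by (simp add: gco_def mult.commute)
  also have "\<dots> = Linv p (axis k 1) \<bullet> Linv p y" by (rule linear_sum_basis[OF l])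
  finally have 1: "(\<Sum>l\<in>UNIV. gco p k l * y $ l) = Linv p (axis k 1) \<bullet> Linv p y" .
  have 2: "(\<Sum>i\<in>UNIV. \<Sum>j\<in>UNIV. chr1 p i j k * x $ i * x $ j) = BB p k x x"
    unfolding chr1_BB by (rule bilinear_sum_basis[OF BB_lin1 BB_lin2])
  show ?thesis using 1 2 BB_diag by simp
qed


lemma comp_deriv:
  assumes "(g has_vector_derivative v) (at t)"
  shows "((\<lambda>s. g s $ j) has_real_derivative v $ j) (at t)"
  using bounded_linear.has_vector_derivative[OF bounded_linear_vec_nth assms]
  by (simp add: has_real_derivative_iff_has_vector_derivative)

lemma cases8: "(i::8) = 0 \<or> i = 1 \<or> i = 2 \<or> i = 3 \<or> i = 4 \<or> i = 5 \<or> i = 6 \<or> i = 7"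
  using UNIV_I[of i] unfolding UNIV8 by blast

lemma geo_facts:
  assumes "geodesic \<gamma> \<gamma>' a b" "a < t" "t < b"
  defines "W \<equiv> (\<lambda>s. Linv (\<gamma> s) (\<gamma>' s))"
  shows "((\<lambda>s. \<gamma> s $ 0) has_real_derivative W t $ 0) (at t)"
    "((\<lambda>s. \<gamma> s $ 1) has_real_derivative W t $ 1) (at t)"
    "((\<lambda>s. W s $ 0) has_real_derivative W t $ 6 * W t $ 4 - W t $ 7 * W t $ 3) (at t)"
    "((\<lambda>s. W s $ 1) has_real_derivative - W t $ 5 * W t $ 4 + W t $ 7 * W t $ 2) (at t)"
    "((\<lambda>s. W s $ 2) has_real_derivative - W t $ 7 * W t $ 1) (at t)"
    "((\<lambda>s. W s $ 3) has_real_derivative W t $ 7 * W t $ 0) (at t)"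
    "((\<lambda>s. W s $ 4) has_real_derivative W t $ 5 * W t $ 1 - W t $ 6 * W t $ 0) (at t)"
    "((\<lambda>s. W s $ 5) has_real_derivative 0) (at t)"
    "((\<lambda>s. W s $ 6) has_real_derivative 0) (at t)"
    "((\<lambda>s. W s $ 7) has_real_derivative 0) (at t)"
proof -
  obtain \<gamma>'' where G: "\<forall>t\<in>{a<..<b}.
      (\<gamma> has_vector_derivative \<gamma>' t) (at t) \<and>
      (\<gamma>' has_vector_derivative \<gamma>'' t) (at t) \<and>
      (\<forall>k. (\<Sum>l\<in>UNIV. gco (\<gamma> t) k l * \<gamma>'' t $ l)
           + (\<Sum>i\<in>UNIV. \<Sum>j\<in>UNIV. chr1 (\<gamma> t) i j k * \<gamma>' t $ i * \<gamma>' t $ j) = 0)"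
    using assms(1) unfolding geodesic_def by blast
  have tI: "t \<in> {a<..<b}" using assms by simp
  have Dg: "\<And>j. ((\<lambda>s. \<gamma> s $ j) has_real_derivative \<gamma>' t $ j) (at t)"
    using G tI comp_deriv by blast
  have Dg': "\<And>j. ((\<lambda>s. \<gamma>' s $ j) has_real_derivative \<gamma>'' t $ j) (at t)"
    using G tI comp_deriv by blast
  have E: "\<And>k. Linv (\<gamma> t) (axis k 1) \<bullet> Linv (\<gamma> t) (\<gamma>'' t) - Linv (\<gamma> t) (\<gamma>' t) \<bullet> brk (\<gamma>' t) (axis k 1) = 0"
  proof -
    fix k
    have "(\<Sum>l\<in>UNIV. gco (\<gamma> t) k l * \<gamma>'' t $ l)
           + (\<Sum>i\<in>UNIV. \<Sum>j\<in>UNIV. chr1 (\<gamma> t) i j k * \<gamma>' t $ i * \<gamma>' t $ j) = 0"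
      using G tI by blast
    then show "?thesis k" by (simp only: geo_sum)
  qed
  define p where "p = \<gamma> t"
  define x where "x = \<gamma>' t"
  define y where "y = \<gamma>'' t"
  have Lc: "\<And>u v i. Linv u v $ i = v $ i - brk u v $ i / 2" by (simp add: Linv_def)
  have DW: "((\<lambda>s. W s $ i) has_real_derivative Linv p y $ i) (at t)" for i
  proof -
    have e: "W = (\<lambda>s. \<gamma>' s - (1/2) *\<^sub>R brk (\<gamma> s) (\<gamma>' s))"
      by (simp add: W_def Linv_def)
    have "((\<lambda>s. \<gamma>' s $ i - (1/2) * brk (\<gamma> s) (\<gamma>' s) $ i) has_real_derivative
        \<gamma>'' t $ i - (1/2) * brk (\<gamma> t) (\<gamma>'' t) $ i) (at t)"
      using cases8[of i]
      apply (elim disjE)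
             apply (simp_all add: brk_nth)
       apply (auto intro!: derivative_eq_intros Dg Dg' simp: field_simps)
      done
    then show ?thesis unfolding e p_def y_def by (simp add: Linv_def)
  qed
  have E5: "Linv p y $ 5 = 0" using E[of 5] unfolding p_def[symmetric] x_def[symmetric] y_def[symmetric]
    by (simp add: inner8 Lc brk_nth axis_def)
  have E6: "Linv p y $ 6 = 0" using E[of 6] unfolding p_def[symmetric] x_def[symmetric] y_def[symmetric]
    by (simp add: inner8 Lc brk_nth axis_def)
  have E7: "Linv p y $ 7 = 0" using E[of 7] unfolding p_def[symmetric] x_def[symmetric] y_def[symmetric]
    by (simp add: inner8 Lc brk_nth axis_def)
  have E': "Linv p (axis k 1) \<bullet> Linv p y - Linv p x \<bullet> brk x (axis k 1) = 0" for k
    using E[of k] unfolding p_def[symmetric] x_def[symmetric] y_def[symmetric] .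
  have Ly: "Linv p y = (\<chi> i. if i = 5 \<or> i = 6 \<or> i = 7 then 0 else Linv p y $ i)"
    using E5 E6 E7 by (auto simp: vec_eq_iff)
  have Ek: "Linv p y $ k = Linv p x \<bullet> brk x (axis k 1)" if "k = 0 \<or> k = 1 \<or> k = 2 \<or> k = 3 \<or> k = 4" for k
  proof -
    have "Linv p (axis k 1) \<bullet> Linv p y = Linv p y $ k"
      using that by (subst Ly) (auto simp: inner8 Lc brk_nth axis_def)
    then show ?thesis using E'[of k] by simp
  qed
  have Wt: "W t = Linv p x" by (simp add: W_def p_def x_def)
  have Wx: "W t $ i = x $ i" if "i = 0 \<or> i = 1 \<or> i = 2 \<or> i = 3 \<or> i = 4" for i
    using that unfolding Wt Lc by (auto simp: brk_nth)
  show "((\<lambda>s. \<gamma> s $ 0) has_real_derivative W t $ 0) (at t)"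
    using Dg[of 0] Wx[of 0] x_def by simp
  show "((\<lambda>s. \<gamma> s $ 1) has_real_derivative W t $ 1) (at t)"
    using Dg[of 1] Wx[of 1] x_def by simp
  show "((\<lambda>s. W s $ 5) has_real_derivative 0) (at t)" using DW[of 5] E5 by simp
  show "((\<lambda>s. W s $ 6) has_real_derivative 0) (at t)" using DW[of 6] E6 by simp
  show "((\<lambda>s. W s $ 7) has_real_derivative 0) (at t)" using DW[of 7] E7 by simp
  show "((\<lambda>s. W s $ 0) has_real_derivative W t $ 6 * W t $ 4 - W t $ 7 * W t $ 3) (at t)"
  proof -
    have "Linv p y $ 0 = W t $ 6 * W t $ 4 - W t $ 7 * W t $ 3"
      using Ek[of 0] unfolding Wt by (simp add: inner8 Lc brk_nth axis_def field_simps)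
    then show ?thesis using DW[of 0] by simp
  qed
  show "((\<lambda>s. W s $ 1) has_real_derivative - W t $ 5 * W t $ 4 + W t $ 7 * W t $ 2) (at t)"
  proof -
    have "Linv p y $ 1 = - W t $ 5 * W t $ 4 + W t $ 7 * W t $ 2"
      using Ek[of 1] unfolding Wt by (simp add: inner8 Lc brk_nth axis_def field_simps)
    then show ?thesis using DW[of 1] by simp
  qed
  show "((\<lambda>s. W s $ 2) has_real_derivative - W t $ 7 * W t $ 1) (at t)"
  proof -
    have "Linv p y $ 2 = - W t $ 7 * W t $ 1"
      using Ek[of 2] unfolding Wt by (simp add: inner8 Lc brk_nth axis_def field_simps)
    then show ?thesis using DW[of 2] by simp
  qed
  show "((\<lambda>s. W s $ 3) has_real_derivative W t $ 7 * W t $ 0) (at t)"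
  proof -
    have "Linv p y $ 3 = W t $ 7 * W t $ 0"
      using Ek[of 3] unfolding Wt by (simp add: inner8 Lc brk_nth axis_def field_simps)
    then show ?thesis using DW[of 3] by simp
  qed
  show "((\<lambda>s. W s $ 4) has_real_derivative W t $ 5 * W t $ 1 - W t $ 6 * W t $ 0) (at t)"
  proof -
    have "Linv p y $ 4 = W t $ 5 * W t $ 1 - W t $ 6 * W t $ 0"
      using Ek[of 4] unfolding Wt by (simp add: inner8 Lc brk_nth axis_def field_simps)
    then show ?thesis using DW[of 4] by simp
  qed
qed




lemma axis_nth8: "(axis i x :: real^8) $ j = (if j = i then x else 0)"
  by (simp add: axis_def)

lemmas basis_defs = Xi_def Xj_def Yi_def Yj_def Yk_def Zi_def Zj_def Zk_def

lemma vpart_nth: "vpart A $ 0 = A$0" "vpart A $ 1 = A$1" "vpart A $ 2 = A$2" "vpart A $ 3 = A$3" "vpart A $ 4 = A$4"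
  by (simp_all add: vpart_def basis_defs axis_def)
lemma zpart_nth: "zpart A $ 5 = A$5" "zpart A $ 6 = A$6" "zpart A $ 7 = A$7"
  by (simp_all add: zpart_def basis_defs axis_def)
lemma zpart_inner: "ci (zpart A) = A$5" "cj (zpart A) = A$6" "ck (zpart A) = A$7"
  by (simp_all add: ci_def cj_def ck_def basis_defs inner_axis zpart_nth)
lemma vpart_inner: "vpart A \<bullet> Xi = A$0" "vpart A \<bullet> Xj = A$1" "vpart A \<bullet> Yi = A$2" "vpart A \<bullet> Yj = A$3" "vpart A \<bullet> Yk = A$4"
  by (simp_all add: basis_defs inner_axis vpart_nth[unfolded basis_defs])
lemma cabs2: "(cabs Z)^2 = (ci Z)^2 + (cj Z)^2 + (ck Z)^2"
  unfolding cabs_def by simp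

lemma qW_eq: "qW Zi (p, A) = A$5" "qW Zj (p, A) = A$6" "qW Zk (p, A) = A$7"
  using zpart_inner by (simp_all add: qW_def ci_def cj_def ck_def)


lemma h1_eq: "h1 (p, A) = (A$0*A$5 + A$1*A$6)^2 + (-(A$6*A$2) + A$5*A$3)^2"
  by (simp add: h1_def E1_def E2_def inner_add_right inner_diff_right vpart_inner zpart_inner algebra_simps)

lemma h2_eq: "h2 (p, A) = (A$5^2 + A$6^2 + A$7^2) * (A$6*A$0 - A$5*A$1)^2 + (A$7*(A$5*A$2 + A$6*A$3) - (A$5^2 + A$6^2)*A$4)^2"
proof -
  have "(vpart A \<bullet> E3 (zpart A))^2 = (cabs (zpart A))^2 * (A$6*A$0 - A$5*A$1)^2"
    by (simp add: E3_def inner_diff_right vpart_inner zpart_inner power_mult_distrib)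
  then show ?thesis
    by (simp add: h2_def E4_def inner_add_right inner_diff_right vpart_inner zpart_inner cabs2)
qed

lemma k_eq: "kfun (p, A) = A$5*A$2 + A$6*A$3 + A$7*A$4"
  by (simp add: kfun_def YZ_def inner_add_right vpart_inner zpart_inner)

lemma xpart_vpart: "Xi \<bullet> xpart (vpart p) = p$0" "Xj \<bullet> xpart (vpart p) = p$1"
  by (simp_all add: xpart_def basis_defs inner_axis' inner_add_right vector_add_component vpart_nth axis_nth8 inner_axis_axis)

lemma ypart_inner: "ypart V \<bullet> Yi = V$2" "ypart V \<bullet> Yj = V$3" "ypart V \<bullet> Yk = V$4"
  by (simp_all add: ypart_def basis_defs inner_add_left axis_nth8 inner_axis_axis)

lemma CZ_inner: "Xi \<bullet> CZ Z W = ((- ci Z) * cj Z * (W\<bullet>Yi) + (ci Z^2 + ck Z^2) * (W\<bullet>Yj) - cj Z * ck Z * (W\<bullet>Yk)) / (ck Z * (cabs Z)^2)"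
  "Xj \<bullet> CZ Z W = ((- (cj Z^2) - ck Z^2) * (W\<bullet>Yi) + ci Z * cj Z * (W\<bullet>Yj) + ci Z * ck Z * (W\<bullet>Yk)) / (ck Z * (cabs Z)^2)"
  by (simp_all add: CZ_def Let_def inner_add_right Xi_def Xj_def inner_axis' axis_nth8 inner_axis_axis)

definition uu :: "real^8 \<Rightarrow> real" where "uu A = A$7 * (A$5^2 + A$6^2 + A$7^2)"

lemma fXi_eq: "fX Xi (p, A) = (if A$7 = 0 then 0 else phi (uu A) *
   sin (2 * pi * (p$0 - ((- A$5) * A$6 * A$2 + (A$5^2 + A$7^2) * A$3 - A$6 * A$7 * A$4) / uu A)))"
  by (simp add: fX_def Let_def zpart_inner Phi_def cabs2 uu_def inner_diff_right xpart_vpart CZ_inner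
      ypart_inner vpart_nth)

lemma fXj_eq: "fX Xj (p, A) = (if A$7 = 0 then 0 else phi (uu A) *
   sin (2 * pi * (p$1 - ((- (A$6^2) - A$7^2) * A$2 + A$5 * A$6 * A$3 + A$5 * A$7 * A$4) / uu A)))"
  by (simp add: fX_def Let_def zpart_inner Phi_def cabs2 uu_def inner_diff_right xpart_vpart CZ_inner
      ypart_inner vpart_nth)



lemma const_interval:
  assumes "\<And>t. a < t \<Longrightarrow> t < b \<Longrightarrow> (g has_real_derivative 0) (at t)"
    "s \<in> {a<..<b}" "t \<in> {a<..<b}"
  shows "g s = g t"
proof -
  obtain c where "\<forall>x\<in>{a<..<b}. g x = c"
    using has_field_derivative_zero_constant[of "{a<..<b}" g] assms(1)
    by (auto intro: has_field_derivative_at_within)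
  then show ?thesis using assms by auto
qed

lemma first_integral_if:
  assumes "\<And>\<gamma> \<gamma>' a b t. geodesic \<gamma> \<gamma>' a b \<Longrightarrow> a < t \<Longrightarrow> t < b \<Longrightarrow>
     ((\<lambda>s. F (\<gamma> s, Linv (\<gamma> s) (\<gamma>' s))) has_real_derivative 0) (at t)"
  shows "first_integral F"
  unfolding first_integral_def
proof (intro allI impI ballI)
  fix \<gamma> \<gamma>' a b s t assume g: "geodesic \<gamma> \<gamma>' a b" and st: "s \<in> {a<..<b}" "t \<in> {a<..<b}"
  show "F (\<gamma> s, Linv (\<gamma> s) (\<gamma>' s)) = F (\<gamma> t, Linv (\<gamma> t) (\<gamma>' t))"
    by (rule const_interval[OF assms[OF g] st])
qed

lemma FI_qW: "first_integral (qW Zi)" "first_integral (qW Zj)" "first_integral (qW Zk)"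
  by (rule first_integral_if, simp add: qW_eq geo_facts)+

lemma FI_h1: "first_integral h1"
proof (rule first_integral_if)
  fix \<gamma> \<gamma>' a b t assume g: "geodesic \<gamma> \<gamma>' a b" "a < t" "t < b"
  define W where "W = (\<lambda>s. Linv (\<gamma> s) (\<gamma>' s))"
  note D = geo_facts[OF g, folded W_def]
  show "((\<lambda>s. h1 (\<gamma> s, Linv (\<gamma> s) (\<gamma>' s))) has_real_derivative 0) (at t)"
    unfolding h1_eq W_def[symmetric]
    by (rule derivative_eq_intros D | simp)+ (simp add: algebra_simps)
qed


lemma FI_h2: "first_integral h2"
proof (rule first_integral_if)
  fix \<gamma> \<gamma>' a b t assume g: "geodesic \<gamma> \<gamma>' a b" "a < t" "t < b"
  define W where "W = (\<lambda>s. Linv (\<gamma> s) (\<gamma>' s))"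
  note D = geo_facts[OF g, folded W_def]
  show "((\<lambda>s. h2 (\<gamma> s, Linv (\<gamma> s) (\<gamma>' s))) has_real_derivative 0) (at t)"
    unfolding h2_eq W_def[symmetric]
    by (rule derivative_eq_intros D | simp)+ (simp add: power2_eq_square algebra_simps)
qed

lemma FI_kfun: "first_integral kfun"
proof (rule first_integral_if)
  fix \<gamma> \<gamma>' a b t assume g: "geodesic \<gamma> \<gamma>' a b" "a < t" "t < b"
  define W where "W = (\<lambda>s. Linv (\<gamma> s) (\<gamma>' s))"
  note D = geo_facts[OF g, folded W_def]
  show "((\<lambda>s. kfun (\<gamma> s, Linv (\<gamma> s) (\<gamma>' s))) has_real_derivative 0) (at t)"
    unfolding k_eq W_def[symmetric]
    by (rule derivative_eq_intros D | simp)+ (simp add: algebra_simps)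
qed


lemma FI_fXi: "first_integral (fX Xi)"
  unfolding first_integral_def
proof (intro allI impI ballI)
  fix \<gamma> \<gamma>' a b s t assume g: "geodesic \<gamma> \<gamma>' a b" and st: "s \<in> {a<..<b}" "t \<in> {a<..<b}"
  define W where "W = (\<lambda>s. Linv (\<gamma> s) (\<gamma>' s))"
  have D: "\<And>r. r \<in> {a<..<b} \<Longrightarrow> ((\<lambda>s. \<gamma> s $ 0) has_real_derivative W r $ 0) (at r)
    \<and> ((\<lambda>s. W s $ 0) has_real_derivative W r $ 6 * W r $ 4 - W r $ 7 * W r $ 3) (at r)
    \<and> ((\<lambda>s. W s $ 1) has_real_derivative - W r $ 5 * W r $ 4 + W r $ 7 * W r $ 2) (at r)
    \<and> ((\<lambda>s. W s $ 2) has_real_derivative - W r $ 7 * W r $ 1) (at r)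
    \<and> ((\<lambda>s. W s $ 3) has_real_derivative W r $ 7 * W r $ 0) (at r)
    \<and> ((\<lambda>s. W s $ 4) has_real_derivative W r $ 5 * W r $ 1 - W r $ 6 * W r $ 0) (at r)
    \<and> ((\<lambda>s. W s $ 5) has_real_derivative 0) (at r)
    \<and> ((\<lambda>s. W s $ 6) has_real_derivative 0) (at r)
    \<and> ((\<lambda>s. W s $ 7) has_real_derivative 0) (at r)"
    using geo_facts[OF g] unfolding W_def by auto
  define a0 where "a0 = W t $ 5"
  define b0 where "b0 = W t $ 6"
  define c0 where "c0 = W t $ 7"
  have C: "W r $ 5 = a0 \<and> W r $ 6 = b0 \<and> W r $ 7 = c0" if "r \<in> {a<..<b}" for r
    unfolding a0_def b0_def c0_def
    using const_interval[of a b "\<lambda>s. W s $ 5", OF _ that st(2)]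
      const_interval[of a b "\<lambda>s. W s $ 6", OF _ that st(2)]
      const_interval[of a b "\<lambda>s. W s $ 7", OF _ that st(2)] D by auto
  show "fX Xi (\<gamma> s, Linv (\<gamma> s) (\<gamma>' s)) = fX Xi (\<gamma> t, Linv (\<gamma> t) (\<gamma>' t))"
  proof (cases "c0 = 0")
    case True
    then show ?thesis using C[OF st(1)] C[OF st(2)] unfolding W_def by (simp add: fXi_eq)
  next
    case False
    define U where "U = c0 * (a0^2 + b0^2 + c0^2)"
    have "a0^2 + b0^2 + c0^2 > 0" using False by (simp add: add_pos_nonneg add_nonneg_pos sum_power2_gt_zero_iff)
    then have U0: "U \<noteq> 0" using False by (simp add: U_def)
    define th where "th = (\<lambda>r. \<gamma> r $ 0 - ((- a0) * b0 * W r $ 2 + (a0^2 + c0^2) * W r $ 3 - b0 * c0 * W r $ 4) / U)"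
    have "th s = th t"
    proof (rule const_interval[OF _ st])
      fix r assume r: "a < r" "r < b"
      then have rI: "r \<in> {a<..<b}" by simp
      note Dr = D[OF rI]
      have "(th has_real_derivative W r $ 0 - ((- a0) * b0 * (- W r $ 7 * W r $ 1) + (a0^2 + c0^2) * (W r $ 7 * W r $ 0) - b0 * c0 * (W r $ 5 * W r $ 1 - W r $ 6 * W r $ 0)) / U) (at r)"
        unfolding th_def using Dr U0
        by (auto intro!: derivative_eq_intros simp: field_simps)
      moreover have "W r $ 0 - ((- a0) * b0 * (- W r $ 7 * W r $ 1) + (a0^2 + c0^2) * (W r $ 7 * W r $ 0) - b0 * c0 * (W r $ 5 * W r $ 1 - W r $ 6 * W r $ 0)) / U = 0"
        using C[OF rI] U0 False by (simp add: U_def field_simps) (simp add: algebra_simps power2_eq_square)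
      ultimately show "(th has_real_derivative 0) (at r)" by simp
    qed
    moreover have e: "\<And>r. Linv (\<gamma> r) (\<gamma>' r) = W r" by (simp add: W_def)
    ultimately show ?thesis using C[OF st(1)] C[OF st(2)] False unfolding e
      by (simp add: fXi_eq th_def uu_def U_def)
  qed
qed

lemma FI_fXj: "first_integral (fX Xj)"
  unfolding first_integral_def
proof (intro allI impI ballI)
  fix \<gamma> \<gamma>' a b s t assume g: "geodesic \<gamma> \<gamma>' a b" and st: "s \<in> {a<..<b}" "t \<in> {a<..<b}"
  define W where "W = (\<lambda>s. Linv (\<gamma> s) (\<gamma>' s))"
  have D: "\<And>r. r \<in> {a<..<b} \<Longrightarrow> ((\<lambda>s. \<gamma> s $ 1) has_real_derivative W r $ 1) (at r)
    \<and> ((\<lambda>s. W s $ 0) has_real_derivative W r $ 6 * W r $ 4 - W r $ 7 * W r $ 3) (at r)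
    \<and> ((\<lambda>s. W s $ 1) has_real_derivative - W r $ 5 * W r $ 4 + W r $ 7 * W r $ 2) (at r)
    \<and> ((\<lambda>s. W s $ 2) has_real_derivative - W r $ 7 * W r $ 1) (at r)
    \<and> ((\<lambda>s. W s $ 3) has_real_derivative W r $ 7 * W r $ 0) (at r)
    \<and> ((\<lambda>s. W s $ 4) has_real_derivative W r $ 5 * W r $ 1 - W r $ 6 * W r $ 0) (at r)
    \<and> ((\<lambda>s. W s $ 5) has_real_derivative 0) (at r)
    \<and> ((\<lambda>s. W s $ 6) has_real_derivative 0) (at r)
    \<and> ((\<lambda>s. W s $ 7) has_real_derivative 0) (at r)"
    using geo_facts[OF g] unfolding W_def by auto
  define a0 where "a0 = W t $ 5"
  define b0 where "b0 = W t $ 6"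
  define c0 where "c0 = W t $ 7"
  have C: "W r $ 5 = a0 \<and> W r $ 6 = b0 \<and> W r $ 7 = c0" if "r \<in> {a<..<b}" for r
    unfolding a0_def b0_def c0_def
    using const_interval[of a b "\<lambda>s. W s $ 5", OF _ that st(2)]
      const_interval[of a b "\<lambda>s. W s $ 6", OF _ that st(2)]
      const_interval[of a b "\<lambda>s. W s $ 7", OF _ that st(2)] D by auto
  show "fX Xj (\<gamma> s, Linv (\<gamma> s) (\<gamma>' s)) = fX Xj (\<gamma> t, Linv (\<gamma> t) (\<gamma>' t))"
  proof (cases "c0 = 0")
    case True
    then show ?thesis using C[OF st(1)] C[OF st(2)] unfolding W_def by (simp add: fXj_eq)
  next
    case False
    define U where "U = c0 * (a0^2 + b0^2 + c0^2)"
    have "a0^2 + b0^2 + c0^2 > 0" using False by (simp add: add_pos_nonneg add_nonneg_pos sum_power2_gt_zero_iff)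
    then have U0: "U \<noteq> 0" using False by (simp add: U_def)
    define th where "th = (\<lambda>r. \<gamma> r $ 1 - ((- (b0^2) - c0^2) * W r $ 2 + a0 * b0 * W r $ 3 + a0 * c0 * W r $ 4) / U)"
    have "th s = th t"
    proof (rule const_interval[OF _ st])
      fix r assume r: "a < r" "r < b"
      then have rI: "r \<in> {a<..<b}" by simp
      note Dr = D[OF rI]
      have "(th has_real_derivative W r $ 1 - ((- (b0^2) - c0^2) * (- W r $ 7 * W r $ 1) + a0 * b0 * (W r $ 7 * W r $ 0) + a0 * c0 * (W r $ 5 * W r $ 1 - W r $ 6 * W r $ 0)) / U) (at r)"
        unfolding th_def using Dr U0
        by (auto intro!: derivative_eq_intros simp: field_simps)
      moreover have "W r $ 1 - ((- (b0^2) - c0^2) * (- W r $ 7 * W r $ 1) + a0 * b0 * (W r $ 7 * W r $ 0) + a0 * c0 * (W r $ 5 * W r $ 1 - W r $ 6 * W r $ 0)) / U = 0"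
        using C[OF rI] U0 False by (simp add: U_def field_simps) (simp add: algebra_simps power2_eq_square)
      ultimately show "(th has_real_derivative 0) (at r)" by simp
    qed
    moreover have e: "\<And>r. Linv (\<gamma> r) (\<gamma>' r) = W r" by (simp add: W_def)
    ultimately show ?thesis using C[OF st(1)] C[OF st(2)] False unfolding e
      by (simp add: fXj_eq th_def uu_def U_def)
  qed
qed



lemma Gamma_nth: "g \<in> Gamma \<Longrightarrow> \<exists>m n. g $ 0 = of_int m \<and> g $ 1 = of_int n"
  unfolding Gamma_def by (auto simp: basis_defs axis_nth8)

lemma nmult_nth: "nmult g p $ 0 = g $ 0 + p $ 0" "nmult g p $ 1 = g $ 1 + p $ 1"
  by (simp_all add: nmult_def brk_nth)

lemma sin_shift_int: "sin (2 * pi * (of_int m + x)) = sin (2 * pi * x)"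
proof -
  have "sin (2 * pi * (of_int m + x)) = sin (2 * pi * x + 2 * pi * of_int m)"
    by (simp add: algebra_simps)
  also have "\<dots> = sin (2 * pi * x)" by (simp add: sin_add sin_int_2pin cos_int_2pin)
  finally show ?thesis .
qed

lemma GI_simple: "Gamma_invariant (qW Zi)" "Gamma_invariant (qW Zj)" "Gamma_invariant (qW Zk)"
  "Gamma_invariant h1" "Gamma_invariant h2" "Gamma_invariant kfun"
  by (simp_all add: Gamma_invariant_def qW_def h1_def h2_def kfun_def)

lemma GI_f: "Gamma_invariant (fX Xi)" "Gamma_invariant (fX Xj)"
  unfolding Gamma_invariant_def
proof (safe)
  fix g p X assume "g \<in> Gamma"
  then obtain m n where mn: "g $ 0 = of_int m" "g $ 1 = of_int n" using Gamma_nth by blast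
  show "fX Xi (nmult g p, X) = fX Xi (p, X)"
    unfolding fXi_eq nmult_nth mn
    by (simp add: add_diff_eq[symmetric] sin_shift_int)
  show "fX Xj (nmult g p, X) = fX Xj (p, X)"
    unfolding fXj_eq nmult_nth mn
    by (simp add: add_diff_eq[symmetric] sin_shift_int)
qed



inductive_set pol :: "('a::real_normed_vector \<Rightarrow> real) set" where
  pconst: "(\<lambda>x. c) \<in> pol"
| plin: "bounded_linear l \<Longrightarrow> l \<in> pol"
| padd: "f \<in> pol \<Longrightarrow> g \<in> pol \<Longrightarrow> (\<lambda>x. f x + g x) \<in> pol"
| pmult: "f \<in> pol \<Longrightarrow> g \<in> pol \<Longrightarrow> (\<lambda>x. f x * g x) \<in> pol"

lemma pminus: "f \<in> pol \<Longrightarrow> (\<lambda>x. - f x) \<in> pol"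
  using pmult[OF pconst[of "-1"]] by simp
lemma pdiff: "f \<in> pol \<Longrightarrow> g \<in> pol \<Longrightarrow> (\<lambda>x. f x - g x) \<in> pol"
  using padd[OF _ pminus] by simp
lemma ppow: "f \<in> pol \<Longrightarrow> (\<lambda>x. f x ^ n) \<in> pol"
  by (induction n) (auto intro: pconst pmult)

lemma pol_deriv:
  assumes "f \<in> pol"
  shows "\<exists>D. (\<forall>x. (f has_derivative D x) (at x)) \<and> (\<forall>h. (\<lambda>x. D x h) \<in> pol)"
  using assms
proof induction
  case (pconst c)
  show ?case by (rule exI[of _ "\<lambda>x h. 0"]) (auto intro: pol.pconst)
next
  case (plin l)
  show ?case by (rule exI[of _ "\<lambda>x. l"]) (auto intro: pol.pconst plin.hyps bounded_linear_imp_has_derivative)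
next
  case (padd f g)
  then obtain Df Dg where "\<forall>x. (f has_derivative Df x) (at x)" "\<forall>h. (\<lambda>x. Df x h) \<in> pol"
    "\<forall>x. (g has_derivative Dg x) (at x)" "\<forall>h. (\<lambda>x. Dg x h) \<in> pol" by blast
  then show ?case
    by (intro exI[of _ "\<lambda>x h. Df x h + Dg x h"]) (auto intro: pol.padd has_derivative_add)
next
  case (pmult f g)
  then obtain Df Dg where H: "\<forall>x. (f has_derivative Df x) (at x)" "\<forall>h. (\<lambda>x. Df x h) \<in> pol"
    "\<forall>x. (g has_derivative Dg x) (at x)" "\<forall>h. (\<lambda>x. Dg x h) \<in> pol" by blast
  have "(\<lambda>x. f x * Dg x h + Df x h * g x) \<in> pol" for h
    using H pmult.hyps(1,2) by (intro pol.padd pol.pmult) auto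
  then show ?case using H
    by (intro exI[of _ "\<lambda>x h. f x * Dg x h + Df x h * g x"])
       (auto intro: has_derivative_mult)
qed

lemma pol_cont: "f \<in> pol \<Longrightarrow> continuous_on UNIV f"
  using pol_deriv by (metis differentiableI differentiable_imp_continuous_within continuous_at_imp_continuous_on)

lemma Ck_mono: "Ck (Suc n) f \<Longrightarrow> Ck n f"
proof (induction n arbitrary: f)
  case 0
  then show ?case by (simp add: differentiable_imp_continuous_on)
next
  case (Suc n)
  then show ?case by simp
qed

lemma pol_Ck: "f \<in> pol \<Longrightarrow> Ck n (f :: 'a::euclidean_space \<Rightarrow> real)"
proof (induction n arbitrary: f)
  case 0
  then show ?case by (simp add: pol_cont)
next
  case (Suc n)
  then obtain D where D: "\<forall>x. (f has_derivative D x) (at x)" "\<forall>h. (\<lambda>x. D x h) \<in> pol"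
    using pol_deriv by blast
  have "f differentiable_on UNIV" using D(1) by (auto simp: differentiable_on_def differentiable_def)
  moreover have "(\<lambda>x. frechet_derivative f (at x) b) = (\<lambda>x. D x b)" for b
    using D(1) frechet_derivative_at by metis
  ultimately show ?case using Suc.IH D(2) by simp
qed


lemma pol_snd: "(\<lambda>x::((real^8) \<times> (real^8)). snd x $ i) \<in> pol"
  by (rule plin) (intro bounded_linear_compose[OF bounded_linear_vec_nth] bounded_linear_snd)
lemma pol_fst: "(\<lambda>x::((real^8) \<times> (real^8)). fst x $ i) \<in> pol"
  by (rule plin) (intro bounded_linear_compose[OF bounded_linear_vec_nth] bounded_linear_fst)

lemma smooth_pol: "f \<in> pol \<Longrightarrow> smooth (f :: (real^8) \<times> (real^8) \<Rightarrow> real)"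
  unfolding smooth_def using pol_Ck by blast

lemmas pol_intros = padd pmult pdiff pminus ppow pconst pol_snd pol_fst

lemma smooth_simple: "smooth (qW Zi)" "smooth (qW Zj)" "smooth (qW Zk)" "smooth h1" "smooth h2" "smooth kfun"
proof -
  have "qW Zi = (\<lambda>x. snd x $ 5)" "qW Zj = (\<lambda>x. snd x $ 6)" "qW Zk = (\<lambda>x. snd x $ 7)"
    by (rule ext, case_tac x, simp add: qW_eq)+
  then show "smooth (qW Zi)" "smooth (qW Zj)" "smooth (qW Zk)"
    by (simp_all add: smooth_pol pol_snd)
  have "h1 = (\<lambda>x. (snd x$0* snd x$5 + snd x$1* snd x$6)^2 + (-(snd x$6* snd x$2) + snd x$5* snd x$3)^2)"
    by (rule ext, case_tac x, simp add: h1_eq)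
  moreover have "(\<lambda>x::(real^8) \<times> (real^8). (snd x$0* snd x$5 + snd x$1* snd x$6)^2 + (-(snd x$6* snd x$2) + snd x$5* snd x$3)^2) \<in> pol"
    by (intro pol_intros)
  ultimately show "smooth h1" by (simp add: smooth_pol)
  have "h2 = (\<lambda>x. (snd x$5^2 + snd x$6^2 + snd x$7^2) * (snd x$6* snd x$0 - snd x$5* snd x$1)^2 + (snd x$7*(snd x$5* snd x$2 + snd x$6* snd x$3) - (snd x$5^2 + snd x$6^2)* snd x$4)^2)"
    by (rule ext, case_tac x, simp add: h2_eq)
  moreover have "(\<lambda>x::(real^8) \<times> (real^8). (snd x$5^2 + snd x$6^2 + snd x$7^2) * (snd x$6* snd x$0 - snd x$5* snd x$1)^2 + (snd x$7*(snd x$5* snd x$2 + snd x$6* snd x$3) - (snd x$5^2 + snd x$6^2)* snd x$4)^2) \<in> pol"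
    by (intro pol_intros)
  ultimately show "smooth h2" by (simp add: smooth_pol)
  have "kfun = (\<lambda>x. snd x$5* snd x$2 + snd x$6* snd x$3 + snd x$7* snd x$4)"
    by (rule ext, case_tac x, simp add: k_eq)
  moreover have "(\<lambda>x::(real^8) \<times> (real^8). snd x$5* snd x$2 + snd x$6* snd x$3 + snd x$7* snd x$4) \<in> pol"
    by (intro pol_intros)
  ultimately show "smooth kfun" by (simp add: smooth_pol)
qed



lemma exp_lower_pow:
  assumes "(x::real) \<ge> 0"
  shows "x ^ n / fact n \<le> exp x"
proof -
  have s: "summable (\<lambda>k. x ^ k /\<^sub>R fact k)" by (rule summable_exp_generic)
  have "x ^ n / fact n \<le> (\<Sum>k<Suc n. x ^ k /\<^sub>R fact k)"
    using assms by (simp add: divide_inverse_commute[symmetric] sum_nonneg)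
  also have "\<dots> \<le> (\<Sum>k. x ^ k /\<^sub>R fact k)"
    by (rule sum_le_suminf[OF s]) (use assms in auto)
  also have "\<dots> = exp x" by (simp add: exp_def)
  finally show ?thesis .
qed

lemma phi_bound:
  assumes "t \<noteq> 0" "\<bar>t\<bar> \<le> 1"
  shows "phi t / \<bar>t\<bar> ^ m \<le> fact (Suc m) * t^2"
proof -
  define y where "y = 1 / t^2"
  have y0: "y > 0" using assms by (simp add: y_def)
  define F where "F = (fact (Suc m) :: real)"
  have F0: "F > 0" by (simp add: F_def)
  have "y ^ Suc m / F \<le> exp y" unfolding F_def using exp_lower_pow[of y "Suc m"] y0 by (simp only: less_imp_le)
  then have a: "y ^ Suc m \<le> F * exp y" using F0 by (simp add: pos_divide_le_eq mult.commute)
  have yp: "y ^ Suc m > 0" using y0 by simp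
  have "exp (- y) = 1 / exp y" by (simp add: exp_minus inverse_eq_divide)
  also have "\<dots> \<le> F / y ^ Suc m" using a yp by (simp add: divide_simps mult.commute)
  finally have e: "exp (- y) \<le> fact (Suc m) / y ^ Suc m" by (simp add: F_def)
  have "fact (Suc m) / y ^ Suc m = fact (Suc m) * \<bar>t\<bar> ^ (2 * Suc m)"
    using assms by (simp add: y_def power_mult power_one_over power2_abs) (simp add: power2_eq_square)
  also have "\<dots> = fact (Suc m) * (\<bar>t\<bar> ^ m * \<bar>t\<bar> ^ (m + 2))"
    by (simp add: power_add[symmetric] mult_2)
  finally have "phi t \<le> fact (Suc m) * (\<bar>t\<bar> ^ m * \<bar>t\<bar> ^ (m + 2))"
    using e assms by (simp add: phi_def y_def)
  then have "phi t / \<bar>t\<bar> ^ m \<le> fact (Suc m) * \<bar>t\<bar> ^ (m + 2)"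
    using assms by (simp add: field_simps)
  also have "\<dots> \<le> fact (Suc m) * \<bar>t\<bar> ^ 2"
    by (intro mult_left_mono power_decreasing) (use assms in auto)
  finally show ?thesis by (simp only: power2_abs)
qed

lemma phi_deriv:
  assumes "t \<noteq> 0"
  shows "(phi has_real_derivative phi t * (2 / t^3)) (at t)"
proof -
  have pt: "phi t = exp (- 1 / t^2)" using assms by (simp add: phi_def)
  have "((\<lambda>t. exp (- 1 / t^2)) has_real_derivative exp (- 1 / t^2) * (2 / t^3)) (at t)"
    using assms by (auto intro!: derivative_eq_intros simp: field_simps power2_eq_square power3_eq_cube)
  then have "((\<lambda>t. exp (- 1 / t^2)) has_derivative (*) (phi t * (2 / t^3))) (at t)"
    unfolding pt[symmetric] has_field_derivative_def .
  then have "(phi has_derivative (*) (phi t * (2 / t^3))) (at t)"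
    by (rule has_derivative_transform_within_open[where s="-{0}"]) (use assms in \<open>auto simp: phi_def\<close>)
  then show ?thesis by (simp add: has_field_derivative_def)
qed


lemma deriv_zero_squeeze:
  fixes f g :: "'a::real_normed_vector \<Rightarrow> real"
  assumes fx: "f x = 0" and gx: "g x = 0" and dg: "(g has_derivative Dg) (at x)"
    and ev: "eventually (\<lambda>y. \<bar>f y\<bar> \<le> M * (g y)^2) (at x)"
  shows "(f has_derivative (\<lambda>h. 0)) (at x)"
proof -
  have "((\<lambda>y. M * (g y)^2) has_derivative (\<lambda>h. 0)) (at x)"
    using gx dg by (auto intro!: derivative_eq_intros)
  then have H: "((\<lambda>y. norm (M * (g y)^2 - M * (g x)^2 - 0) / norm (y - x)) \<longlongrightarrow> 0) (at x)"
    unfolding has_derivative_iff_norm by simp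
  have "((\<lambda>y. norm (f y - f x - 0) / norm (y - x)) \<longlongrightarrow> 0) (at x)"
  proof (rule real_tendsto_sandwich[OF _ _ tendsto_const H])
    show "\<forall>\<^sub>F y in at x. 0 \<le> norm (f y - f x - 0) / norm (y - x)" by simp
    show "\<forall>\<^sub>F y in at x. norm (f y - f x - 0) / norm (y - x) \<le> norm (M * (g y)^2 - M * (g x)^2 - 0) / norm (y - x)"
      using ev by eventually_elim (auto simp: fx gx intro: divide_right_mono)
  qed
  then show ?thesis unfolding has_derivative_iff_norm by simp
qed


lemma inv_pow_deriv:
  fixes u :: "'a::real_normed_vector \<Rightarrow> real"
  assumes ux: "u x \<noteq> 0" and Du: "(u has_derivative Du) (at x)"
  shows "((\<lambda>y. inverse (u y ^ m)) has_derivative (\<lambda>h. - (of_nat m * Du h * inverse (u x ^ m) / u x))) (at x)"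
proof (induction m)
  case 0
  then show ?case by (simp add: has_derivative_const)
next
  case (Suc m)
  have "((\<lambda>y. inverse (u y) * inverse (u y ^ m)) has_derivative
     (\<lambda>h. inverse (u x) * - (of_nat m * Du h * inverse (u x ^ m) / u x)
         + - (inverse (u x) * Du h * inverse (u x)) * inverse (u x ^ m))) (at x)"
    by (rule has_derivative_mult[OF Deriv.has_derivative_inverse[OF ux Du] Suc.IH])
  then show ?case
    apply (simp only: power_Suc inverse_mult_distrib)
    apply (erule has_derivative_eq_rhs)
    using ux by (simp add: fun_eq_iff field_simps)
qed

lemma phi_comp_deriv:
  fixes u :: "'a::real_normed_vector \<Rightarrow> real"
  assumes "u x \<noteq> 0" "(u has_derivative Du) (at x)"
  shows "((\<lambda>y. phi (u y)) has_derivative (\<lambda>h. Du h * (phi (u x) * (2 / u x ^ 3)))) (at x)"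
  using DERIV_compose_FDERIV[OF phi_deriv[OF assms(1)] assms(2)] .

definition GK :: "('a \<Rightarrow> real) \<Rightarrow> ('a \<Rightarrow> real) \<Rightarrow> ('a \<Rightarrow> real) \<Rightarrow> ('a \<Rightarrow> real) \<Rightarrow> ('a \<Rightarrow> real) \<Rightarrow> nat \<Rightarrow> 'a \<Rightarrow> real" where
  "GK u al Q P R m x = (if u x = 0 then 0 else
     phi (u x) * (P x * sin (al x + Q x / u x) + R x * cos (al x + Q x / u x)) / u x ^ m)"

lemma alg_GK:
  fixes u z ph P R s c Du Dal DQ DP DR Q mm :: real
  assumes "u \<noteq> 0" "z \<noteq> 0"
  shows "Du * (ph * (2 / u ^ 3)) * (P * s + R * c) * inverse z
      + ph * (DP * s + P * (c * (Dal + (DQ * u - Q * Du) / (u * u)))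
          + (DR * c - R * (s * (Dal + (DQ * u - Q * Du) / (u * u))))) * inverse z
      + ph * (P * s + R * c) * (- (mm * Du * inverse z / u))
    = ph * ((2 * Du * P + u ^ 3 * DP - mm * u ^ 2 * Du * P - R * (u ^ 3 * Dal + u ^ 2 * DQ - u * Q * Du)) * s
     + (2 * Du * R + u ^ 3 * DR - mm * u ^ 2 * Du * R + P * (u ^ 3 * Dal + u ^ 2 * DQ - u * Q * Du)) * c)
      / (z * u ^ 3)"
  using assms by (simp add: field_simps power2_eq_square power3_eq_cube)

lemma GK_nz_deriv:
  fixes u :: "'a::real_normed_vector \<Rightarrow> real"
  assumes ux: "u x \<noteq> 0" and cu: "continuous_on UNIV u"
    and Du: "(u has_derivative Du) (at x)" and Dal: "(al has_derivative Dal) (at x)"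
    and DQ: "(Q has_derivative DQ) (at x)" and DP: "(P has_derivative DP) (at x)"
    and DR: "(R has_derivative DR) (at x)"
  defines "T \<equiv> \<lambda>h. u x ^ 3 * Dal h + u x ^ 2 * DQ h - u x * Q x * Du h"
  shows "(GK u al Q P R m has_derivative (\<lambda>h. phi (u x) *
      ((2 * Du h * P x + u x ^ 3 * DP h - of_nat m * u x ^ 2 * Du h * P x - R x * T h) * sin (al x + Q x / u x)
     + (2 * Du h * R x + u x ^ 3 * DR h - of_nat m * u x ^ 2 * Du h * R x + P x * T h) * cos (al x + Q x / u x))
      / u x ^ (m + 3))) (at x)"
proof -
  define th where "th = (\<lambda>y. al y + Q y / u y)"
  define F where "F = (\<lambda>y. phi (u y) * (P y * sin (th y) + R y * cos (th y)) * inverse (u y ^ m))"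
  have S: "open {y. u y \<noteq> 0}" using cu by (simp add: open_Collect_neq continuous_on_const)
  have GF: "GK u al Q P R m y = F y" if "y \<in> {y. u y \<noteq> 0}" for y
    using that by (simp add: GK_def F_def th_def divide_inverse)
  have Dth: "(th has_derivative (\<lambda>h. Dal h + (DQ h * u x - Q x * Du h) / (u x * u x))) (at x)"
    unfolding th_def using ux Dal DQ Du
    by (auto intro!: derivative_eq_intros simp: field_simps)
  have "(F has_derivative (\<lambda>h.
        Du h * (phi (u x) * (2 / u x ^ 3)) * (P x * sin (th x) + R x * cos (th x)) * inverse (u x ^ m)
      + phi (u x) * (DP h * sin (th x) + P x * (cos (th x) * (Dal h + (DQ h * u x - Q x * Du h) / (u x * u x)))
          + (DR h * cos (th x) - R x * (sin (th x) * (Dal h + (DQ h * u x - Q x * Du h) / (u x * u x))))) * inverse (u x ^ m)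
      + phi (u x) * (P x * sin (th x) + R x * cos (th x)) * (- (of_nat m * Du h * inverse (u x ^ m) / u x)))) (at x)"
    unfolding F_def
    apply (rule has_derivative_eq_rhs)
     apply (rule has_derivative_mult has_derivative_add phi_comp_deriv[OF ux Du] inv_pow_deriv[OF ux Du]
        DP DR Dth has_derivative_sin has_derivative_cos | rule DERIV_sin DERIV_cos)+
    using ux apply (simp add: fun_eq_iff field_simps)
    done
  then have G: "(GK u al Q P R m has_derivative (\<lambda>h.
        Du h * (phi (u x) * (2 / u x ^ 3)) * (P x * sin (th x) + R x * cos (th x)) * inverse (u x ^ m)
      + phi (u x) * (DP h * sin (th x) + P x * (cos (th x) * (Dal h + (DQ h * u x - Q x * Du h) / (u x * u x)))
          + (DR h * cos (th x) - R x * (sin (th x) * (Dal h + (DQ h * u x - Q x * Du h) / (u x * u x))))) * inverse (u x ^ m)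
      + phi (u x) * (P x * sin (th x) + R x * cos (th x)) * (- (of_nat m * Du h * inverse (u x ^ m) / u x)))) (at x)"
    by (rule has_derivative_transform_within_open[OF _ S]) (use ux GF in auto)
  have thx: "al x + Q x / u x = th x" by (simp add: th_def)
  have z: "u x ^ m \<noteq> 0" using ux by simp
  show ?thesis
    unfolding thx T_def power_add
    apply (rule has_derivative_eq_rhs[OF G])
    apply (rule ext)
    apply (rule alg_GK[OF ux z])
    done
qed


lemma phi_nonneg: "phi t \<ge> 0" by (simp add: phi_def)

lemma pol_ev: "f \<in> pol \<Longrightarrow> eventually (\<lambda>y. \<bar>f y - f x\<bar> < 1) (at x)"
proof -
  assume "f \<in> pol"
  then have "isCont f x" using pol_cont continuous_on_eq_continuous_at by blast
  then have "(f \<longlongrightarrow> f x) (at x)" by (simp add: isCont_def)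
  then have "eventually (\<lambda>y. dist (f y) (f x) < 1) (at x)" by (rule tendstoD) simp
  then show ?thesis by (simp add: dist_real_def)
qed

lemma GK_zero_deriv:
  assumes u: "u \<in> pol" and P: "P \<in> pol" and R: "R \<in> pol" and ux: "u x = 0"
  shows "(GK u al Q P R m has_derivative (\<lambda>h. 0)) (at x)"
proof -
  obtain Du where Du: "\<forall>x. (u has_derivative Du x) (at x)" using pol_deriv[OF u] by blast
  define M where "M = fact (Suc m) * (\<bar>P x\<bar> + \<bar>R x\<bar> + 2)"
  show ?thesis
  proof (rule deriv_zero_squeeze[where g=u and M=M])
    show "GK u al Q P R m x = 0" by (simp add: GK_def ux)
    show "u x = 0" by fact
    show "(u has_derivative Du x) (at x)" using Du by blast
    show "\<forall>\<^sub>F y in at x. \<bar>GK u al Q P R m y\<bar> \<le> M * (u y)\<^sup>2"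
      using pol_ev[OF u, of x] pol_ev[OF P, of x] pol_ev[OF R, of x]
    proof eventually_elim
      case (elim y)
      show ?case
      proof (cases "u y = 0")
        case True
        then show ?thesis by (simp add: GK_def)
      next
        case False
        define th where "th = al y + Q y / u y"
        have uy1: "\<bar>u y\<bar> \<le> 1" using elim ux by simp
        have S: "\<bar>P y * sin th + R y * cos th\<bar> \<le> \<bar>P x\<bar> + \<bar>R x\<bar> + 2"
        proof -
          have "\<bar>P y * sin th + R y * cos th\<bar> \<le> \<bar>P y\<bar> * \<bar>sin th\<bar> + \<bar>R y\<bar> * \<bar>cos th\<bar>"
            by (metis abs_mult abs_triangle_ineq)
          also have "\<dots> \<le> \<bar>P y\<bar> * 1 + \<bar>R y\<bar> * 1"
            by (intro add_mono mult_left_mono) auto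
          also have "\<dots> \<le> \<bar>P x\<bar> + \<bar>R x\<bar> + 2" using elim by linarith
          finally show ?thesis .
        qed
        have "\<bar>GK u al Q P R m y\<bar> = phi (u y) / \<bar>u y\<bar> ^ m * \<bar>P y * sin th + R y * cos th\<bar>"
          using False phi_nonneg[of "u y"] by (simp add: GK_def th_def abs_mult abs_divide power_abs)
        also have "\<dots> \<le> (fact (Suc m) * (u y)^2) * (\<bar>P x\<bar> + \<bar>R x\<bar> + 2)"
          by (intro mult_mono phi_bound False uy1 S) (auto simp: phi_nonneg)
        also have "\<dots> = M * (u y)^2" by (simp add: M_def)
        finally show ?thesis .
      qed
    qed
  qed
qed


lemma GK_Ck:
  fixes u al Q :: "'a::euclidean_space \<Rightarrow> real"
  assumes u: "u \<in> pol" and al: "al \<in> pol" and Q: "Q \<in> pol"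
  shows "P \<in> pol \<Longrightarrow> R \<in> pol \<Longrightarrow> Ck n (GK u al Q P R m)"
proof (induction n arbitrary: P R m)
  obtain Du where Du: "\<forall>x. (u has_derivative Du x) (at x)" "\<forall>h. (\<lambda>x. Du x h) \<in> pol"
    using pol_deriv[OF u] by blast
  obtain Dal where Dal: "\<forall>x. (al has_derivative Dal x) (at x)" "\<forall>h. (\<lambda>x. Dal x h) \<in> pol"
    using pol_deriv[OF al] by blast
  obtain DQ where DQ: "\<forall>x. (Q has_derivative DQ x) (at x)" "\<forall>h. (\<lambda>x. DQ x h) \<in> pol"
    using pol_deriv[OF Q] by blast
  have cu: "continuous_on UNIV u" using pol_cont[OF u] .
  define T where "T = (\<lambda>h y. u y ^ 3 * Dal y h + u y ^ 2 * DQ y h - u y * Q y * Du y h)"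
  have Tp: "(\<lambda>y. T h y) \<in> pol" for h
    unfolding T_def using u Q Du(2) Dal(2) DQ(2) by (intro pol_intros) auto
  have key: "\<exists>P' R'. (\<forall>x. (GK u al Q P R m has_derivative (\<lambda>h. GK u al Q (P' h) (R' h) (m + 3) x)) (at x))
      \<and> (\<forall>h. P' h \<in> pol \<and> R' h \<in> pol)" if P: "P \<in> pol" and R: "R \<in> pol" for P R m
  proof -
    obtain DP where DP: "\<forall>x. (P has_derivative DP x) (at x)" "\<forall>h. (\<lambda>x. DP x h) \<in> pol"
      using pol_deriv[OF P] by blast
    obtain DR where DR: "\<forall>x. (R has_derivative DR x) (at x)" "\<forall>h. (\<lambda>x. DR x h) \<in> pol"
      using pol_deriv[OF R] by blast
    define P' where "P' = (\<lambda>h y. 2 * Du y h * P y + u y ^ 3 * DP y h - of_nat m * u y ^ 2 * Du y h * P y - R y * T h y)"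
    define R' where "R' = (\<lambda>h y. 2 * Du y h * R y + u y ^ 3 * DR y h - of_nat m * u y ^ 2 * Du y h * R y + P y * T h y)"
    have "(GK u al Q P R m has_derivative (\<lambda>h. GK u al Q (P' h) (R' h) (m + 3) x)) (at x)" for x
    proof (cases "u x = 0")
      case True
      then show ?thesis using GK_zero_deriv[OF u P R True] by (simp add: GK_def)
    next
      case False
      show ?thesis
        using GK_nz_deriv[OF False cu, of "Du x" al "Dal x" Q "DQ x" P "DP x" R "DR x" m] Du Dal DQ DP DR False
        by (simp add: GK_def P'_def R'_def T_def)
    qed
    moreover have "P' h \<in> pol \<and> R' h \<in> pol" for h
      unfolding P'_def R'_def using u P R Du(2) DP(2) DR(2) Tp[of h] by (auto intro!: pol_intros)
    ultimately show ?thesis by blast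
  qed
  {
    case 0
    obtain P' R' where D0: "\<forall>x. (GK u al Q P R m has_derivative (\<lambda>h. GK u al Q (P' h) (R' h) (m + 3) x)) (at x)"
      using key[OF 0] by blast
    have "isCont (GK u al Q P R m) x" for x
      by (rule has_derivative_continuous[OF spec[OF D0]])
    then have "continuous_on UNIV (GK u al Q P R m)"
      by (intro continuous_at_imp_continuous_on ballI)
    then show ?case by (simp only: Ck.simps)
  next
    case (Suc n)
    obtain P' R' where D: "\<forall>x. (GK u al Q P R m has_derivative (\<lambda>h. GK u al Q (P' h) (R' h) (m + 3) x)) (at x)"
      and PR: "\<forall>h. P' h \<in> pol \<and> R' h \<in> pol"
      using key[OF Suc.prems] by blast
    have "GK u al Q P R m differentiable_on UNIV"
      using D by (auto simp: differentiable_on_def differentiable_def)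
    moreover have "(\<lambda>x. frechet_derivative (GK u al Q P R m) (at x) b) = GK u al Q (P' b) (R' b) (m + 3)" for b
    proof (rule ext)
      fix x
      have "frechet_derivative (GK u al Q P R m) (at x) = (\<lambda>h. GK u al Q (P' h) (R' h) (m + 3) x)"
        by (rule sym, rule frechet_derivative_at, rule spec[OF D])
      then show "frechet_derivative (GK u al Q P R m) (at x) b = GK u al Q (P' b) (R' b) (m + 3) x" by simp
    qed
    ultimately show ?case using Suc.IH PR by simp
  }
qed



lemma uu_zero: "uu A = 0 \<longleftrightarrow> A$7 = 0"
proof
  assume "uu A = 0"
  then show "A$7 = 0"
    unfolding uu_def by (auto simp: add_nonneg_eq_0_iff)
qed (simp add: uu_def)

lemma smooth_fX: "smooth (fX Xi)" "smooth (fX Xj)"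
proof -
  define u where "u = (\<lambda>x::(real^8) \<times> (real^8). snd x $ 7 * (snd x $ 5 ^ 2 + snd x $ 6 ^ 2 + snd x $ 7 ^ 2))"
  have up: "u \<in> pol" unfolding u_def by (intro pol_intros)
  have uu: "u x = uu (snd x)" for x by (simp add: u_def uu_def)
  define al1 where "al1 = (\<lambda>x::(real^8) \<times> (real^8). 2 * pi * fst x $ 0)"
  define Q1 where "Q1 = (\<lambda>x::(real^8) \<times> (real^8). - (2 * pi) * ((- snd x $ 5) * snd x $ 6 * snd x $ 2 + (snd x $ 5 ^ 2 + snd x $ 7 ^ 2) * snd x $ 3 - snd x $ 6 * snd x $ 7 * snd x $ 4))"
  define al2 where "al2 = (\<lambda>x::(real^8) \<times> (real^8). 2 * pi * fst x $ 1)"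
  define Q2 where "Q2 = (\<lambda>x::(real^8) \<times> (real^8). - (2 * pi) * ((- (snd x $ 6 ^ 2) - snd x $ 7 ^ 2) * snd x $ 2 + snd x $ 5 * snd x $ 6 * snd x $ 3 + snd x $ 5 * snd x $ 7 * snd x $ 4))"
  have p: "al1 \<in> pol" "Q1 \<in> pol" "al2 \<in> pol" "Q2 \<in> pol"
    unfolding al1_def Q1_def al2_def Q2_def by (intro pol_intros)+
  have "fX Xi = GK u al1 Q1 (\<lambda>x. 1) (\<lambda>x. 0) 0"
  proof (rule ext)
    fix x :: "(real^8) \<times> (real^8)"
    obtain p A where x: "x = (p, A)" by fastforce
    show "fX Xi x = GK u al1 Q1 (\<lambda>x. 1) (\<lambda>x. 0) 0 x"
    proof (cases "A$7 = 0")
      case True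
      then show ?thesis by (simp add: x fXi_eq GK_def uu uu_zero)
    next
      case False
      then have "uu A \<noteq> 0" by (simp add: uu_zero)
      then show ?thesis using False
        by (simp add: x fXi_eq GK_def uu al1_def Q1_def uu_def field_simps)
    qed
  qed
  then show "smooth (fX Xi)" unfolding smooth_def using GK_Ck[OF up p(1,2) pconst pconst] by simp
  have "fX Xj = GK u al2 Q2 (\<lambda>x. 1) (\<lambda>x. 0) 0"
  proof (rule ext)
    fix x :: "(real^8) \<times> (real^8)"
    obtain p A where x: "x = (p, A)" by fastforce
    show "fX Xj x = GK u al2 Q2 (\<lambda>x. 1) (\<lambda>x. 0) 0 x"
    proof (cases "A$7 = 0")
      case True
      then show ?thesis by (simp add: x fXj_eq GK_def uu uu_zero)
    next
      case False
      then have "uu A \<noteq> 0" by (simp add: uu_zero)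
      then show ?thesis using False
        by (simp add: x fXj_eq GK_def uu al2_def Q2_def uu_def field_simps)
    qed
  qed
  then show "smooth (fX Xj)" unfolding smooth_def using GK_Ck[OF up p(3,4) pconst pconst] by simp
qed

theorem lemma4p4:
  assumes "F \<in> {qW Zi, qW Zj, qW Zk, h1, h2, kfun, fX Xi, fX Xj}"
  shows "smooth F \<and> first_integral F \<and> Gamma_invariant F"
  using assms smooth_simple smooth_fX FI_qW FI_h1 FI_h2 FI_kfun FI_fXi FI_fXj GI_simple GI_f
  by auto


end
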